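(* Let $\phi$ be a cocycle with respect to $\theta$ on $\mathbb{R}^+\times\Sigma\times X$ having a nested bounded pullback absorbing set $\{B_\sigma\}_{\sigma\in\Sigma}$. Assume that for every $\varepsilon>0$ and every $\sigma\in\Sigma$ there exist $T=T(B_\sigma,\varepsilon)\ge0$ and a function $\psi_{T,\sigma}\in\mathrm{Contr}(B_\sigma)$ such that $$\|\phi(T,\theta_{-T}(\sigma);x)-\phi(T,\theta_{-T}(\sigma);y)\|\le\varepsilon+\psi_{T,\sigma}(x,y)\quad\text{for all }x,y\in B_\sigma.$$ Then $\phi$ is pullback asymptotically compact.
   Context: Let $X$ be a Banach space with norm $\|\cdot\|$. Let $\Sigma$ be a set and $\theta=\{\theta_t\}_{t\in\mathbb{R}}$ a group of bijections $\theta_t:\Sigma\to\Sigma$ with $\theta_0=\mathrm{id}$ and $\theta_{t+\tau}=\theta_t\circ\theta_\tau$. A cocycle with respect to $\theta$ is a map $\phi:\mathbb{R}^+\times\Sigma\times X\to X$ with $\phi(0,\sigma;x)=x$ and $\phi(s+t,\sigma;x)=\phi(s,\theta_t(\sigma);\phi(t,\sigma;x))$ for all $s,t\ge 0$. For $B\subset X$, $\phi(t,\sigma;B)=\{\phi(t,\sigma;x):x\in B\}$. A bounded pullback absorbing set is a family $\{B_\sigma\}_{\sigma\in\Sigma}$ of bounded subsets of $X$ such that for every $\sigma$ and bounded $B\subset X$ there is $T\ge0$ with $\phi(t,\theta_{-t}(\sigma);B)\subset B_\sigma$ for all $t\ge T$; it is nested if moreover $B_{\theta_{-t}(\sigma)}\subset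 B_\sigma$ for all $t\ge0$, $\sigma\in\Sigma$. For a bounded set $B\subset X$, $\mathrm{Contr}(B)$ denotes the set of functions $\psi:X\times X\to\mathbb{R}$ such that every sequence $\{x_n\}\subset B$ has a subsequence $\{x_{n_k}\}$ with $\lim_{k\to\infty}\lim_{l\to\infty}\psi(x_{n_k},x_{n_l})=0$. $\phi$ is pullback asymptotically compact if for each $\sigma\in\Sigma$, every bounded sequence $\{x_n\}\subset X$ and every $\{t_n\}\subset\mathbb{R}^+$ with $t_n\to+\infty$, the sequence $\{\phi(t_n,\theta_{-t_n}(\sigma);x_n)\}$ is precompact in $X$. *)

theory Defs
  imports "HOL-Analysis.Analysis"
begin

definition flow_group :: "(real \<Rightarrow> 's \<Rightarrow> 's) \<Rightarrow> bool" where
  "flow_group \<theta> \<longleftrightarrow> (\<forall>t. bij (\<theta> t)) \<and> \<theta> 0 = id \<and>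
     (\<forall>t \<tau>. \<theta> (t + \<tau>) = \<theta> t \<circ> \<theta> \<tau>)"

text \<open>Cocycle with respect to theta; only times t >= 0 are relevant.\<close>
definition cocycle :: "(real \<Rightarrow> 's \<Rightarrow> 's) \<Rightarrow> (real \<Rightarrow> 's \<Rightarrow> 'x \<Rightarrow> 'x) \<Rightarrow> bool" where
  "cocycle \<theta> \<phi> \<longleftrightarrow> (\<forall>\<sigma> x. \<phi> 0 \<sigma> x = x) \<and>
     (\<forall>s t \<sigma> x. s \<ge> 0 \<longrightarrow> t \<ge> 0 \<longrightarrow> \<phi> (s + t) \<sigma> x = \<phi> s (\<theta> t \<sigma>) (\<phi> t \<sigma> x))"

definition bounded_pullback_absorbing ::
  "(real \<Rightarrow> 's \<Rightarrow> 's) \<Rightarrow> (real \<Rightarrow> 's \<Rightarrow> 'x::real_normed_vector \<Rightarrow> 'x) \<Rightarrow> ('s \<Rightarrow> 'x set) \<Rightarrow> bool" where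
  "bounded_pullback_absorbing \<theta> \<phi> B \<longleftrightarrow> (\<forall>\<sigma>. bounded (B \<sigma>)) \<and>
     (\<forall>\<sigma> D. bounded D \<longrightarrow> (\<exists>T\<ge>0. \<forall>t\<ge>T. \<phi> t (\<theta> (-t) \<sigma>) ` D \<subseteq> B \<sigma>))"

definition nested_family :: "(real \<Rightarrow> 's \<Rightarrow> 's) \<Rightarrow> ('s \<Rightarrow> 'x set) \<Rightarrow> bool" where
  "nested_family \<theta> B \<longleftrightarrow> (\<forall>\<sigma> t. t \<ge> 0 \<longrightarrow> B (\<theta> (-t) \<sigma>) \<subseteq> B \<sigma>)"

definition Contr :: "'x set \<Rightarrow> ('x \<Rightarrow> 'x \<Rightarrow> real) set" where
  "Contr B = {\<psi>. \<forall>x::nat \<Rightarrow> 'x. (\<forall>n. x n \<in> B) \<longrightarrow>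
     (\<exists>r L. strict_mono r \<and> (\<forall>k. (\<lambda>l. \<psi> (x (r k)) (x (r l))) \<longlonglongrightarrow> L k) \<and> L \<longlonglongrightarrow> 0)}"

definition pullback_asymptotically_compact ::
  "(real \<Rightarrow> 's \<Rightarrow> 's) \<Rightarrow> (real \<Rightarrow> 's \<Rightarrow> 'x::real_normed_vector \<Rightarrow> 'x) \<Rightarrow> bool" where
  "pullback_asymptotically_compact \<theta> \<phi> \<longleftrightarrow>
     (\<forall>\<sigma> (x::nat \<Rightarrow> 'x) (t::nat \<Rightarrow> real). bounded (range x) \<longrightarrow> (\<forall>n. t n \<ge> 0) \<longrightarrow>
        filterlim t at_top sequentially \<longrightarrow>
        compact (closure (range (\<lambda>n. \<phi> (t n) (\<theta> (- t n) \<sigma>) (x n)))))"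

end

theory Submission
  imports Defs
begin

lemma compact_closure_from_tb:
  fixes S :: "'x::banach set"
  assumes "\<And>e. e > 0 \<Longrightarrow> \<exists>k. finite k \<and> k \<subseteq> S \<and> S \<subseteq> (\<Union>x\<in>k. ball x e)"
  shows "compact (closure S)"
proof -
  have "Met_TC.mtotally_bounded S"
    unfolding Met_TC.mtotally_bounded_def using assms by simp
  moreover have "Met_TC.mcomplete TYPE('x)"
    by (simp add: complete_UNIV)
  ultimately show ?thesis
    using Met_TC.mtotally_bounded_eq_compact_closure_of by force
qed

lemma separated_seq:
  fixes S :: "'x::metric_space set"
  assumes "e > 0" "\<And>k. finite k \<Longrightarrow> k \<subseteq> S \<Longrightarrow> \<not> S \<subseteq> (\<Union>x\<in>k. ball x e)"
  shows "\<exists>w::nat \<Rightarrow> 'x. (\<forall>n. w n \<in> S) \<and> (\<forall>m n. m < n \<longrightarrow> dist (w m) (w n) \<ge> e)"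
proof -
  let ?Q = "\<lambda>x n r. r \<in> S \<and> (\<forall>m < (n::nat). \<not> (dist (x m) r < e))"
  have "\<exists>x. \<forall>n::nat. ?Q x n (x n)"
  proof (rule dependent_wellorder_choice)
    fix n x assume "\<And>y. y < n \<Longrightarrow> ?Q x y (x y)"
    then have "\<not> S \<subseteq> (\<Union>x\<in>x ` {0..<n}. ball x e)"
      using assms(2)[of "x ` {0 ..< n}"] by (auto simp: subset_eq)
    then obtain z where z:"z\<in>S" "z \<notin> (\<Union>x\<in>x ` {0..<n}. ball x e)"
      unfolding subset_eq by auto
    show "\<exists>r. ?Q x n r"
      using z by auto
  qed simp
  then obtain x where Q: "\<forall>n. ?Q x n (x n)" by blast
  have Q1: "\<And>n. x n \<in> S" using Q by simp
  have Q2: "\<And>m n. m < n \<Longrightarrow> dist (x m) (x n) \<ge> e"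
  proof -
    fix m n :: nat assume "m < n"
    have "\<forall>m < n. \<not> (dist (x m) (x n) < e)" using Q by simp
    then have "\<not> dist (x m) (x n) < e" using \<open>m < n\<close> by simp
    then show "dist (x m) (x n) \<ge> e" by linarith
  qed
  show ?thesis
    apply (rule_tac x=x in exI)
    using Q1 Q2 by auto
qed

lemma main_compact:
  fixes y :: "nat \<Rightarrow> 'x::banach"
  assumes H: "\<And>e. e > 0 \<Longrightarrow> \<exists>(N::nat) (A::'z set) \<psi> (z::nat \<Rightarrow> 'z). \<psi> \<in> Contr A \<and> (\<forall>n\<ge>N. z n \<in> A) \<and>
      (\<forall>n\<ge>N. \<forall>m\<ge>N. norm (y n - y m) \<le> e + \<psi> (z n) (z m))"
  shows "compact (closure (range y))"
proof (rule compact_closure_from_tb, rule ccontr)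
  fix e :: real assume e: "e > 0"
    and nt: "\<not> (\<exists>k. finite k \<and> k \<subseteq> range y \<and> range y \<subseteq> (\<Union>x\<in>k. ball x e))"
  have nt': "\<And>k. finite k \<Longrightarrow> k \<subseteq> range y \<Longrightarrow> \<not> range y \<subseteq> (\<Union>x\<in>k. ball x e)"
    using nt by blast
  obtain w :: "nat \<Rightarrow> 'x" where w1: "\<forall>n. w n \<in> range y" and w2: "\<forall>m n. m < n \<longrightarrow> dist (w m) (w n) \<ge> e"
    using separated_seq[OF e nt'] by blast
  have w: "\<And>n. w n \<in> range y" "\<And>m n. m < n \<Longrightarrow> dist (w m) (w n) \<ge> e"
    using w1 w2 by auto
  have "\<forall>j. \<exists>n. w j = y n" using w(1) by blast
  then obtain ix :: "nat \<Rightarrow> nat" where ix: "\<And>j. w j = y (ix j)" using choice[of "\<lambda>j n. w j = y n"] by blast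
  have inj: "inj ix"
  proof (rule injI)
    fix a b assume "ix a = ix b"
    then have "w a = w b" using ix by simp
    show "a = b"
    proof (rule ccontr)
      assume "a \<noteq> b"
      then have "dist (w a) (w b) \<ge> e \<or> dist (w b) (w a) \<ge> e" using w(2) by (meson linorder_neqE_nat)
      then have "w a \<noteq> w b" using e by auto
      then show False using \<open>w a = w b\<close> by simp
    qed
  qed
  have e3: "e/3 > 0" using e by simp
  obtain N :: nat and A :: "'z set" and \<psi> and z :: "nat \<Rightarrow> 'z" where P1: "\<psi> \<in> Contr A" and P2: "\<forall>n\<ge>N. z n \<in> A"
    and P3: "\<forall>n\<ge>N. \<forall>m\<ge>N. norm (y n - y m) \<le> e/3 + \<psi> (z n) (z m)"
    using H[OF e3] by blast
  have P: "\<psi> \<in> Contr A" "\<And>n. n \<ge> N \<Longrightarrow> z n \<in> A"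
    "\<And>n m. n \<ge> N \<Longrightarrow> m \<ge> N \<Longrightarrow> norm (y n - y m) \<le> e/3 + \<psi> (z n) (z m)"
    using P1 P2 P3 by auto
  have fin: "finite {j. ix j < N}"
    using finite_vimageI[OF _ inj, of "{..<N}"] by (simp add: vimage_def)
  obtain j0 where j0: "\<And>j. j \<ge> j0 \<Longrightarrow> ix j \<ge> N"
  proof -
    obtain M :: nat where "\<forall>j\<in>{j. ix j < N}. j \<le> M" using fin finite_nat_set_iff_bounded_le by blast
    then have "\<And>j. j \<ge> Suc M \<Longrightarrow> ix j \<ge> N"
    proof -
      fix j assume "j \<ge> Suc M"
      show "ix j \<ge> N"
      proof (rule ccontr)
        assume "\<not> ix j \<ge> N"
        then have "j \<in> {j. ix j < N}" by simp
        with \<open>\<forall>j\<in>{j. ix j < N}. j \<le> M\<close> have "j \<le> M" by blast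
        with \<open>j \<ge> Suc M\<close> show False by simp
      qed
    qed
    then show ?thesis using that by blast
  qed
  define u where "u = (\<lambda>j. z (ix (j0 + j)))"
  have uA: "\<forall>n. u n \<in> A" using P(2) j0 unfolding u_def by simp
  have "\<forall>x::nat \<Rightarrow> 'z. (\<forall>n. x n \<in> A) \<longrightarrow>
     (\<exists>r L. strict_mono r \<and> (\<forall>k. (\<lambda>l. \<psi> (x (r k)) (x (r l))) \<longlonglongrightarrow> L k) \<and> L \<longlonglongrightarrow> 0)"
    using P(1) unfolding Contr_def by simp
  then have "\<exists>r L. strict_mono r \<and> (\<forall>k. (\<lambda>l. \<psi> (u (r k)) (u (r l))) \<longlonglongrightarrow> L k) \<and> L \<longlonglongrightarrow> 0"
    using uA by blast
  then obtain r :: "nat \<Rightarrow> nat" and L :: "nat \<Rightarrow> real" where rL1: "strict_mono r" and rL2: "\<forall>k. (\<lambda>l. \<psi> (u (r k)) (u (r l))) \<longlonglongrightarrow> L k"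
    and rL3: "L \<longlonglongrightarrow> 0" by blast
  have rL: "strict_mono r" "\<And>k. (\<lambda>l. \<psi> (u (r k)) (u (r l))) \<longlonglongrightarrow> L k" "L \<longlonglongrightarrow> 0"
    using rL1 rL2 rL3 by auto
  obtain k :: nat where k: "L k < e/3"
  proof -
    have "eventually (\<lambda>k. L k < e/3) sequentially"
      using order_tendstoD(2)[OF rL(3) e3] .
    then show ?thesis using that by (auto simp: eventually_sequentially)
  qed
  have "eventually (\<lambda>l. \<psi> (u (r k)) (u (r l)) < e/3) sequentially"
    using order_tendstoD(2)[OF rL(2)[of k] k] .
  then obtain l :: nat where l: "l > k" "\<psi> (u (r k)) (u (r l)) < e/3"
  proof -
    obtain M :: nat where "\<And>l. l \<ge> M \<Longrightarrow> \<psi> (u (r k)) (u (r l)) < e/3"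
      using \<open>eventually _ _\<close> unfolding eventually_sequentially by blast
    then show ?thesis using that[of "max M (Suc k)"] by simp
  qed
  have rl: "r k < r l" using rL(1) l(1) by (simp add: strict_mono_less)
  have "e \<le> dist (w (j0 + r k)) (w (j0 + r l))" using w(2) rl by simp
  also have "\<dots> = norm (y (ix (j0 + r k)) - y (ix (j0 + r l)))" by (simp add: ix dist_norm)
  also have "\<dots> \<le> e/3 + \<psi> (u (r k)) (u (r l))"
    using P(3) j0 unfolding u_def by simp
  finally show False using l(2) e by simp
qed


theorem theorem4p2:
  fixes \<theta> :: "real \<Rightarrow> 's \<Rightarrow> 's"
    and \<phi> :: "real \<Rightarrow> 's \<Rightarrow> 'x::banach \<Rightarrow> 'x"
    and B :: "'s \<Rightarrow> 'x set"
  assumes "flow_group \<theta>"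
    and "cocycle \<theta> \<phi>"
    and "bounded_pullback_absorbing \<theta> \<phi> B"
    and "nested_family \<theta> B"
    and "\<forall>\<epsilon>>0. \<forall>\<sigma>. \<exists>T\<ge>0. \<exists>\<psi>\<in>Contr (B \<sigma>). \<forall>x\<in>B \<sigma>. \<forall>y\<in>B \<sigma>.
           norm (\<phi> T (\<theta> (-T) \<sigma>) x - \<phi> T (\<theta> (-T) \<sigma>) y) \<le> \<epsilon> + \<psi> x y"
  shows "pullback_asymptotically_compact \<theta> \<phi>"
  unfolding pullback_asymptotically_compact_def
proof (intro allI impI)
  fix \<sigma> and x :: "nat \<Rightarrow> 'x" and t :: "nat \<Rightarrow> real"
  assume bx: "bounded (range x)" and t0: "\<forall>n. t n \<ge> 0" and tl: "filterlim t at_top sequentially"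
  define y where "y = (\<lambda>n. \<phi> (t n) (\<theta> (- t n) \<sigma>) (x n))"
  have grp: "\<And>a b. \<theta> (a + b) = \<theta> a \<circ> \<theta> b" using assms(1) unfolding flow_group_def by blast
  have coc: "\<And>s t \<sigma> x. s \<ge> 0 \<Longrightarrow> t \<ge> 0 \<Longrightarrow> \<phi> (s + t) \<sigma> x = \<phi> s (\<theta> t \<sigma>) (\<phi> t \<sigma> x)"
    using assms(2) unfolding cocycle_def by blast
  have "compact (closure (range y))"
  proof (rule main_compact)
    fix e :: real assume e: "e > 0"
    obtain T \<psi> where T: "T \<ge> 0" "\<psi> \<in> Contr (B \<sigma>)"
      and bd: "\<And>a b. a \<in> B \<sigma> \<Longrightarrow> b \<in> B \<sigma> \<Longrightarrow>
           norm (\<phi> T (\<theta> (-T) \<sigma>) a - \<phi> T (\<theta> (-T) \<sigma>) b) \<le> e + \<psi> a b"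
      using assms(5) e by meson
    define \<sigma>' where "\<sigma>' = \<theta> (-T) \<sigma>"
    obtain T0 where T0: "T0 \<ge> 0" "\<And>s. s \<ge> T0 \<Longrightarrow> \<phi> s (\<theta> (-s) \<sigma>') ` range x \<subseteq> B \<sigma>'"
      using assms(3) bx unfolding bounded_pullback_absorbing_def by meson
    have nest: "B \<sigma>' \<subseteq> B \<sigma>" using assms(4) T(1) unfolding nested_family_def \<sigma>'_def by blast
    obtain N where N: "\<And>n. n \<ge> N \<Longrightarrow> t n \<ge> T + T0"
      using tl unfolding filterlim_at_top eventually_sequentially by blast
    define z where "z = (\<lambda>n. \<phi> (t n - T) (\<theta> (- t n) \<sigma>) (x n))"
    have th: "\<theta> (-(t n - T)) \<sigma>' = \<theta> (- t n) \<sigma>" for n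
      using grp[of "-(t n - T)" "-T"] unfolding \<sigma>'_def by simp
    have th2: "\<theta> (t n - T) (\<theta> (- t n) \<sigma>) = \<sigma>'" for n
      using grp[of "t n - T" "- t n"] unfolding \<sigma>'_def by simp
    have zB: "z n \<in> B \<sigma>" if "n \<ge> N" for n
    proof -
      have "t n - T \<ge> T0" using N[OF that] by simp
      from T0(2)[OF this] have "z n \<in> B \<sigma>'" unfolding z_def th by blast
      then show ?thesis using nest by blast
    qed
    have yz: "y n = \<phi> T \<sigma>' (z n)" if "n \<ge> N" for n
    proof -
      have "t n - T \<ge> 0" using N[OF that] T0(1) by simp
      from coc[OF T(1) this, of "\<theta> (- t n) \<sigma>" "x n"] show ?thesis
        unfolding y_def z_def th2 by simp
    qed
    show "\<exists>(N::nat) (A::'x set) \<psi> (z::nat \<Rightarrow> 'x). \<psi> \<in> Contr A \<and> (\<forall>n\<ge>N. z n \<in> A) \<and>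
      (\<forall>n\<ge>N. \<forall>m\<ge>N. norm (y n - y m) \<le> e + \<psi> (z n) (z m))"
      apply (rule exI[of _ N], rule exI[of _ "B \<sigma>"], rule exI[of _ \<psi>], rule exI[of _ z])
      using T(2) zB yz bd unfolding \<sigma>'_def by simp
  qed
  then show "compact (closure (range (\<lambda>n. \<phi> (t n) (\<theta> (- t n) \<sigma>) (x n))))"
    unfolding y_def .
qed

end
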